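(* For every point set $X$ that is a permutation, $\mathrm{GB}(X)\le 2\,\mathrm{opt}(X)$.
   Context: Points have integer coordinates; $X$ is a permutation if every horizontal and every vertical line contains at most one point of $X$. Two points are collinear if they share an $x$- or a $y$-coordinate; for non-collinear $p,q$, $\square_{p,q}$ is the smallest closed axis-parallel rectangle containing both; the pair is satisfied in $S$ if some $r\in S\setminus\{p,q\}$ lies in $\square_{p,q}$, and $S$ is satisfied if all its non-collinear pairs are. $\mathrm{opt}(X)$ is the minimum $|Y|$ with $X\cup Y$ satisfied. Guillotine bound: a guillotine partitioning tree $T$ is built as follows. The root $r$ has region $S(r)=B$, a bounding box of $X$. While some leaf $v$ has $|S(v)\cap X|>1$, choose such $v$ and a vertical or horizontal line $L(v)$ inside $S(v)$ containing no point of $X$ that splits $S(v)$ into two rectangles $S',S''$ with $X\cap S'\ne\emptyset\ne X\cap S''$; give $v$ two children with regions $S'$ and $S''$. The cost of an internal vertex $v$ is the number of pairs of points of $X\cap S(v)$ that are consecutive in increasing $y$-order (if $L(v)$ is vertical) or in increasing $x$-order (if $L(v)$ is horizontal) and lie on opposite sides of $L(v)$; leaves cost $0$. $\mathrm{GB}_T(X)$ is the total cost and $\mathrm{GB}(X)=\max_T\mathrm{GB}_T(X)$. *)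

theory Defs
  imports Complex_Main
begin

type_synonym point = "int \<times> int"

definition is_permutation :: "point set \<Rightarrow> bool" where
  "is_permutation X \<longleftrightarrow>
     (\<forall>p\<in>X. \<forall>q\<in>X. p \<noteq> q \<longrightarrow> fst p \<noteq> fst q \<and> snd p \<noteq> snd q)"

definition collinear_pt :: "point \<Rightarrow> point \<Rightarrow> bool" where
  "collinear_pt p q \<longleftrightarrow> fst p = fst q \<or> snd p = snd q"

definition in_box :: "point \<Rightarrow> point \<Rightarrow> point \<Rightarrow> bool" where
  "in_box p q r \<longleftrightarrow>
     min (fst p) (fst q) \<le> fst r \<and> fst r \<le> max (fst p) (fst q) \<and>
     min (snd p) (snd q) \<le> snd r \<and> snd r \<le> max (snd p) (snd q)"

definition pair_satisfied :: "point set \<Rightarrow> point \<Rightarrow> point \<Rightarrow> bool" where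
  "pair_satisfied S p q \<longleftrightarrow> (\<exists>r \<in> S - {p, q}. in_box p q r)"

definition satisfied :: "point set \<Rightarrow> bool" where
  "satisfied S \<longleftrightarrow>
     (\<forall>p\<in>S. \<forall>q\<in>S. \<not> collinear_pt p q \<longrightarrow> pair_satisfied S p q)"

definition opt :: "point set \<Rightarrow> nat" where
  "opt X = (LEAST k. \<exists>Y. finite Y \<and> card Y = k \<and> satisfied (X \<union> Y))"

text \<open>Guillotine partitioning trees. A region is a closed rectangle
  [a,b] x [c,d], encoded as (a,b,c,d). VCut l: vertical line x = l;
  HCut l: horizontal line y = l.\<close>
datatype gtree = Leaf | VCut real gtree gtree | HCut real gtree gtree

type_synonym rect = "real \<times> real \<times> real \<times> real"

definition inR :: "point set \<Rightarrow> rect \<Rightarrow> point set" where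
  "inR X R = (case R of (a,b,c,d) \<Rightarrow>
     {p \<in> X. a \<le> real_of_int (fst p) \<and> real_of_int (fst p) \<le> b \<and>
              c \<le> real_of_int (snd p) \<and> real_of_int (snd p) \<le> d})"

definition is_bbox :: "point set \<Rightarrow> rect \<Rightarrow> bool" where
  "is_bbox X R \<longleftrightarrow> inR X R = X"

fun valid_gtree :: "point set \<Rightarrow> rect \<Rightarrow> gtree \<Rightarrow> bool" where
  "valid_gtree X R Leaf \<longleftrightarrow> card (inR X R) \<le> 1"
| "valid_gtree X (a,b,c,d) (VCut l T1 T2) \<longleftrightarrow>
     a < l \<and> l < b \<and>
     (\<forall>p \<in> inR X (a,b,c,d). real_of_int (fst p) \<noteq> l) \<and>
     inR X (a,l,c,d) \<noteq> {} \<and> inR X (l,b,c,d) \<noteq> {} \<and>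
     valid_gtree X (a,l,c,d) T1 \<and> valid_gtree X (l,b,c,d) T2"
| "valid_gtree X (a,b,c,d) (HCut l T1 T2) \<longleftrightarrow>
     c < l \<and> l < d \<and>
     (\<forall>p \<in> inR X (a,b,c,d). real_of_int (snd p) \<noteq> l) \<and>
     inR X (a,b,c,l) \<noteq> {} \<and> inR X (a,b,l,d) \<noteq> {} \<and>
     valid_gtree X (a,b,c,l) T1 \<and> valid_gtree X (a,b,l,d) T2"

definition vcost :: "point set \<Rightarrow> real \<Rightarrow> nat" where
  "vcost S l = card {(p,q). p \<in> S \<and> q \<in> S \<and> snd p < snd q \<and>
       \<not> (\<exists>r\<in>S. snd p < snd r \<and> snd r < snd q) \<and>
       (real_of_int (fst p) < l \<longleftrightarrow> l < real_of_int (fst q))}"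

definition hcost :: "point set \<Rightarrow> real \<Rightarrow> nat" where
  "hcost S l = card {(p,q). p \<in> S \<and> q \<in> S \<and> fst p < fst q \<and>
       \<not> (\<exists>r\<in>S. fst p < fst r \<and> fst r < fst q) \<and>
       (real_of_int (snd p) < l \<longleftrightarrow> l < real_of_int (snd q))}"

fun gb_tree :: "point set \<Rightarrow> rect \<Rightarrow> gtree \<Rightarrow> nat" where
  "gb_tree X R Leaf = 0"
| "gb_tree X (a,b,c,d) (VCut l T1 T2) =
     vcost (inR X (a,b,c,d)) l + gb_tree X (a,l,c,d) T1 + gb_tree X (l,b,c,d) T2"
| "gb_tree X (a,b,c,d) (HCut l T1 T2) =
     hcost (inR X (a,b,c,d)) l + gb_tree X (a,b,c,l) T1 + gb_tree X (a,b,l,d) T2"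

definition GB :: "point set \<Rightarrow> nat" where
  "GB X = Max {gb_tree X B T | B T. is_bbox X B \<and> valid_gtree X B T}"

end

theory Submission
  imports Defs
begin


definition box_closed :: "point set \<Rightarrow> bool" where
  "box_closed W \<longleftrightarrow> (\<forall>p\<in>W. \<forall>q\<in>W. \<forall>r. in_box p q r \<longrightarrow> r \<in> W)"

lemma sat_Int: "satisfied Z \<Longrightarrow> box_closed W \<Longrightarrow> satisfied (Z \<inter> W)"
  unfolding satisfied_def pair_satisfied_def box_closed_def by blast

lemma bc_UNIV: "box_closed UNIV" by (simp add: box_closed_def)

lemma bc_Int: "box_closed A \<Longrightarrow> box_closed B \<Longrightarrow> box_closed (A \<inter> B)"
  unfolding box_closed_def by blast

lemma bc_fle: "box_closed {p. real_of_int (fst p) \<le> l}"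
  unfolding box_closed_def in_box_def by (auto simp: max_def split: if_splits)
lemma bc_fgt: "box_closed {p. l < real_of_int (fst p)}"
  unfolding box_closed_def in_box_def by (auto simp: min_def split: if_splits)
lemma bc_sle: "box_closed {p. real_of_int (snd p) \<le> l}"
  unfolding box_closed_def in_box_def by (auto simp: max_def split: if_splits)
lemma bc_sgt: "box_closed {p. l < real_of_int (snd p)}"
  unfolding box_closed_def in_box_def by (auto simp: min_def split: if_splits)

lemma cross_v:
  assumes sat: "satisfied S"
  shows "u \<in> S \<Longrightarrow> v \<in> S \<Longrightarrow> real_of_int (fst u) \<le> l \<Longrightarrow> l < real_of_int (fst v) \<Longrightarrow>
    \<exists>a\<in>S. \<exists>b\<in>S. real_of_int (fst a) \<le> l \<and> l < real_of_int (fst b) \<and> snd a = snd b \<and>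
       min (snd u) (snd v) \<le> snd a \<and> snd a \<le> max (snd u) (snd v)"
proof (induction "nat (\<bar>fst u - fst v\<bar> + \<bar>snd u - snd v\<bar>)" arbitrary: u v rule: less_induct)
  case less
  show ?case
  proof (cases "snd u = snd v")
    case True
    then show ?thesis using less.prems by force
  next
    case False
    have "fst u \<noteq> fst v" using less.prems by auto
    hence "\<not> collinear_pt u v" using False by (simp add: collinear_pt_def)
    then obtain r where r: "r \<in> S" "r \<noteq> u" "r \<noteq> v" "in_box u v r"
      using sat less.prems unfolding satisfied_def pair_satisfied_def by blast
    have rne: "fst r \<noteq> fst u \<or> snd r \<noteq> snd u" "fst r \<noteq> fst v \<or> snd r \<noteq> snd v"
      using r(2,3) by (auto simp: prod_eq_iff)
    show ?thesis
    proof (cases "real_of_int (fst r) \<le> l")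
      case True
      have lt: "nat (\<bar>fst r - fst v\<bar> + \<bar>snd r - snd v\<bar>) < nat (\<bar>fst u - fst v\<bar> + \<bar>snd u - snd v\<bar>)"
        using r(4) rne unfolding in_box_def by (auto simp: min_def max_def abs_if split: if_splits)
      obtain a b where ab: "a \<in> S" "b \<in> S" "real_of_int (fst a) \<le> l" "l < real_of_int (fst b)" "snd a = snd b"
        "min (snd r) (snd v) \<le> snd a" "snd a \<le> max (snd r) (snd v)"
        using less.hyps[OF lt r(1) less.prems(2) True less.prems(4)] by blast
      show ?thesis using ab r(4) unfolding in_box_def by (intro bexI[OF _ ab(1)] bexI[OF _ ab(2)]) auto
    next
      case False
      hence F: "l < real_of_int (fst r)" by simp
      have lt: "nat (\<bar>fst u - fst r\<bar> + \<bar>snd u - snd r\<bar>) < nat (\<bar>fst u - fst v\<bar> + \<bar>snd u - snd v\<bar>)"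
        using r(4) rne unfolding in_box_def by (auto simp: min_def max_def abs_if split: if_splits)
      obtain a b where ab: "a \<in> S" "b \<in> S" "real_of_int (fst a) \<le> l" "l < real_of_int (fst b)" "snd a = snd b"
        "min (snd u) (snd r) \<le> snd a" "snd a \<le> max (snd u) (snd r)"
        using less.hyps[OF lt less.prems(1) r(1) less.prems(3) F] by blast
      show ?thesis using ab r(4) unfolding in_box_def by (intro bexI[OF _ ab(1)] bexI[OF _ ab(2)]) auto
    qed
  qed
qed

lemma cross_h:
  assumes sat: "satisfied S"
  shows "u \<in> S \<Longrightarrow> v \<in> S \<Longrightarrow> real_of_int (snd u) \<le> l \<Longrightarrow> l < real_of_int (snd v) \<Longrightarrow>
    \<exists>a\<in>S. \<exists>b\<in>S. real_of_int (snd a) \<le> l \<and> l < real_of_int (snd b) \<and> fst a = fst b \<and>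
       min (fst u) (fst v) \<le> fst a \<and> fst a \<le> max (fst u) (fst v)"
proof (induction "nat (\<bar>snd u - snd v\<bar> + \<bar>fst u - fst v\<bar>)" arbitrary: u v rule: less_induct)
  case less
  show ?case
  proof (cases "fst u = fst v")
    case True
    then show ?thesis using less.prems by force
  next
    case False
    have "snd u \<noteq> snd v" using less.prems by auto
    hence "\<not> collinear_pt u v" using False by (simp add: collinear_pt_def)
    then obtain r where r: "r \<in> S" "r \<noteq> u" "r \<noteq> v" "in_box u v r"
      using sat less.prems unfolding satisfied_def pair_satisfied_def by blast
    have rne: "snd r \<noteq> snd u \<or> fst r \<noteq> fst u" "snd r \<noteq> snd v \<or> fst r \<noteq> fst v"
      using r(2,3) by (auto simp: prod_eq_iff)
    show ?thesis
    proof (cases "real_of_int (snd r) \<le> l")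
      case True
      have lt: "nat (\<bar>snd r - snd v\<bar> + \<bar>fst r - fst v\<bar>) < nat (\<bar>snd u - snd v\<bar> + \<bar>fst u - fst v\<bar>)"
        using r(4) rne unfolding in_box_def by (auto simp: min_def max_def abs_if split: if_splits)
      obtain a b where ab: "a \<in> S" "b \<in> S" "real_of_int (snd a) \<le> l" "l < real_of_int (snd b)" "fst a = fst b"
        "min (fst r) (fst v) \<le> fst a" "fst a \<le> max (fst r) (fst v)"
        using less.hyps[OF lt r(1) less.prems(2) True less.prems(4)] by blast
      show ?thesis using ab r(4) unfolding in_box_def by (intro bexI[OF _ ab(1)] bexI[OF _ ab(2)]) auto
    next
      case False
      hence F: "l < real_of_int (snd r)" by simp
      have lt: "nat (\<bar>snd u - snd r\<bar> + \<bar>fst u - fst r\<bar>) < nat (\<bar>snd u - snd v\<bar> + \<bar>fst u - fst v\<bar>)"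
        using r(4) rne unfolding in_box_def by (auto simp: min_def max_def abs_if split: if_splits)
      obtain a b where ab: "a \<in> S" "b \<in> S" "real_of_int (snd a) \<le> l" "l < real_of_int (snd b)" "fst a = fst b"
        "min (fst u) (fst r) \<le> fst a" "fst a \<le> max (fst u) (fst r)"
        using less.hyps[OF lt less.prems(1) r(1) less.prems(3) F] by blast
      show ?thesis using ab r(4) unfolding in_box_def by (intro bexI[OF _ ab(1)] bexI[OF _ ab(2)]) auto
    qed
  qed
qed


lemma rows_cols:
  "finite S \<Longrightarrow> satisfied S \<Longrightarrow> S \<noteq> {} \<Longrightarrow> card (fst ` S) + card (snd ` S) \<le> card S + 1"
proof (induction "card S" arbitrary: S rule: less_induct)
  case less
  define m where "m = Max (snd ` S)"
  define T where "T = {p\<in>S. snd p = m}"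
  define S' where "S' = {p\<in>S. snd p < m}"
  have mem: "m \<in> snd ` S" unfolding m_def using less.prems by auto
  have le: "\<And>p. p \<in> S \<Longrightarrow> snd p \<le> m" unfolding m_def using less.prems by auto
  have TS: "S = T \<union> S'" "T \<inter> S' = {}" unfolding T_def S'_def using le by (auto simp: less_le)
  have Tne: "T \<noteq> {}" unfolding T_def using mem by auto
  have fin: "finite T" "finite S'" using less.prems(1) TS by auto
  have cS: "card S = card T + card S'" using TS fin by (simp add: card_Un_disjoint)
  show ?case
  proof (cases "S' = {}")
    case True
    have "S = T" using TS True by simp
    moreover have "snd ` T = {m}" using Tne unfolding T_def by auto
    ultimately have "snd ` S = {m}" by simp
    moreover have "card (fst ` S) \<le> card S" using less.prems(1) by (rule card_image_le)
    ultimately show ?thesis by simp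
  next
    case False
    have S'eq: "S' = S \<inter> {p. real_of_int (snd p) \<le> real_of_int m - 1/2}"
      unfolding S'_def using le by force
    have satS': "satisfied S'" unfolding S'eq by (rule sat_Int[OF less.prems(2) bc_sle])
    have lt: "card S' < card S" using cS Tne fin by auto
    have IH: "card (fst ` S') + card (snd ` S') \<le> card S' + 1"
      using less.hyps[OF lt fin(2) satS' False] .
    have "snd ` S = snd ` T \<union> snd ` S'" using TS by auto
    moreover have "snd ` T = {m}" using Tne unfolding T_def by auto
    ultimately have "snd ` S = insert m (snd ` S')" by simp
    moreover have "m \<notin> snd ` S'" unfolding S'_def by auto
    ultimately
    have c1: "card (snd ` S) = card (snd ` S') + 1" using fin by simp
    obtain u where u: "u \<in> S'" using False by auto
    obtain v where v: "v \<in> T" using Tne by auto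
    have "u \<in> S" "v \<in> S" "real_of_int (snd u) \<le> real_of_int m - 1/2"
      "real_of_int m - 1/2 < real_of_int (snd v)"
      using u v unfolding S'_def T_def by auto
    from cross_h[OF less.prems(2) this]
    obtain a b where ab: "a \<in> S" "b \<in> S" "real_of_int (snd a) \<le> real_of_int m - 1/2"
      "real_of_int m - 1/2 < real_of_int (snd b)" "fst a = fst b" by blast
    have "a \<in> S'" using ab unfolding S'_def by auto
    moreover have "b \<in> T" using ab le[OF ab(2)] unfolding T_def by auto
    ultimately have "fst a \<in> fst ` T \<inter> fst ` S'" using ab(5) by (metis IntI image_eqI)
    hence "fst ` T \<inter> fst ` S' \<noteq> {}" by blast
    hence ne: "card (fst ` T \<inter> fst ` S') \<ge> 1" using fin by (simp add: Suc_le_eq card_gt_0_iff)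
    have fS: "fst ` S = fst ` T \<union> fst ` S'" using TS(1) by (metis image_Un)
    have "card (fst ` T) + card (fst ` S') = card (fst ` T \<union> fst ` S') + card (fst ` T \<inter> fst ` S')"
      using fin by (intro card_Un_Int) auto
    hence "card (fst ` S) + card (fst ` T \<inter> fst ` S') = card (fst ` T) + card (fst ` S')"
      using fS by (metis)
    moreover have "card (fst ` T) \<le> card T" using fin by (simp add: card_image_le)
    ultimately show ?thesis using IH c1 cS ne by linarith
  qed
qed




lemma card_fiber2:
  fixes P :: "('a \<times> 'a) set" and g h :: "'a \<Rightarrow> int"
  assumes finP: "finite P"
    and P: "\<And>p q. (p,q) \<in> P \<Longrightarrow> g p < g q \<and> p \<in> A \<and> q \<in> A"
    and cons: "\<And>p q r. (p,q) \<in> P \<Longrightarrow> r \<in> A \<Longrightarrow> \<not> (g p < g r \<and> g r < g q)"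
    and inj: "\<And>p q. p \<in> A \<Longrightarrow> q \<in> A \<Longrightarrow> g p = g q \<Longrightarrow> p = q"
  shows "card {pq\<in>P. g (fst pq) \<le> y \<and> y \<le> g (snd pq)} \<le> 2"
proof -
  define F1 where "F1 = {pq\<in>P. g (fst pq) \<le> y \<and> y < g (snd pq)}"
  define F2 where "F2 = {pq\<in>P. g (snd pq) = y}"
  have sub: "{pq\<in>P. g (fst pq) \<le> y \<and> y \<le> g (snd pq)} \<subseteq> F1 \<union> F2"
    unfolding F1_def F2_def by auto
  have f: "finite F1" "finite F2" using finP unfolding F1_def F2_def by auto
  have c1: "card F1 \<le> Suc 0"
  proof (unfold card_le_Suc0_iff_eq[OF f(1)], intro ballI)
    fix x1 x2 assume a0: "x1 \<in> F1" "x2 \<in> F1"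
    obtain p q p' q' where xe: "x1 = (p,q)" "x2 = (p',q')" by (metis surj_pair)
    have a: "(p,q) \<in> F1" "(p',q') \<in> F1" using a0 xe by auto
    have P1: "g p < g q" "p \<in> A" "q \<in> A" "g p \<le> y" "y < g q" using a(1) P unfolding F1_def by auto
    have P2: "g p' < g q'" "p' \<in> A" "q' \<in> A" "g p' \<le> y" "y < g q'" using a(2) P unfolding F1_def by auto
    have i1: "(p,q) \<in> P" "(p',q') \<in> P" using a unfolding F1_def by auto
    have "g p = g p'"
      using cons[OF i1(1) P2(2)] cons[OF i1(2) P1(2)] P1 P2 by linarith
    hence pp: "p = p'" using inj P1 P2 by blast
    have "g q = g q'"
      using cons[OF i1(1) P2(3)] cons[OF i1(2) P1(3)] P1 P2 pp by force
    hence "q = q'" using inj P1 P2 by blast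
    thus "x1 = x2" using pp xe by auto
  qed
  have c2: "card F2 \<le> Suc 0"
  proof (unfold card_le_Suc0_iff_eq[OF f(2)], intro ballI)
    fix x1 x2 assume a0: "x1 \<in> F2" "x2 \<in> F2"
    obtain p q p' q' where xe: "x1 = (p,q)" "x2 = (p',q')" by (metis surj_pair)
    have a: "(p,q) \<in> F2" "(p',q') \<in> F2" using a0 xe by auto
    have P1: "g p < g q" "p \<in> A" "q \<in> A" "g q = y" using a(1) P unfolding F2_def by auto
    have P2: "g p' < g q'" "p' \<in> A" "q' \<in> A" "g q' = y" using a(2) P unfolding F2_def by auto
    have i1: "(p,q) \<in> P" "(p',q') \<in> P" using a unfolding F2_def by auto
    have qq: "q = q'" using inj P1 P2 by force
    have "g p = g p'"
      using cons[OF i1(1) P2(2)] cons[OF i1(2) P1(2)] P1 P2 by linarith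
    hence "p = p'" using inj P1 P2 by blast
    thus "x1 = x2" using qq xe by auto
  qed
  have "card {pq\<in>P. g (fst pq) \<le> y \<and> y \<le> g (snd pq)} \<le> card (F1 \<union> F2)"
    using sub f by (intro card_mono) auto
  also have "\<dots> \<le> card F1 + card F2" by (rule card_Un_le)
  finally show ?thesis using c1 c2 by linarith
qed



lemma vcost_le:
  assumes finS: "finite S" and sat: "satisfied S" and XS: "XW \<subseteq> S"
    and inj: "\<forall>p\<in>XW. \<forall>q\<in>XW. snd p = snd q \<longrightarrow> p = q"
    and nol: "\<forall>p\<in>XW. real_of_int (fst p) \<noteq> l"
  shows "vcost XW l \<le> 2 * card (snd ` {p\<in>S. real_of_int (fst p) \<le> l} \<inter> snd ` {p\<in>S. l < real_of_int (fst p)})"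
proof -
  define P where "P = {(p,q). p \<in> XW \<and> q \<in> XW \<and> snd p < snd q \<and>
       \<not> (\<exists>r\<in>XW. snd p < snd r \<and> snd r < snd q) \<and>
       (real_of_int (fst p) < l \<longleftrightarrow> l < real_of_int (fst q))}"
  define C where "C = snd ` {p\<in>S. real_of_int (fst p) \<le> l} \<inter> snd ` {p\<in>S. l < real_of_int (fst p)}"
  define F where "F y = {pq\<in>P. snd (fst pq) \<le> y \<and> y \<le> snd (snd pq)}" for y
  have vc: "vcost XW l = card P" by (simp add: vcost_def P_def)
  have finX: "finite XW" using finS XS finite_subset by blast
  have finP: "finite P" by (rule finite_subset[of _ "XW \<times> XW"]) (use finX in \<open>auto simp: P_def\<close>)
  have finC: "finite C" unfolding C_def using finS by auto
  have cover: "P \<subseteq> (\<Union>y\<in>C. F y)"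
  proof
    fix pq assume pq: "pq \<in> P"
    obtain p q where pqe: "pq = (p,q)" by (metis surj_pair)
    have h: "p \<in> XW" "q \<in> XW" "snd p < snd q" "real_of_int (fst p) < l \<longleftrightarrow> l < real_of_int (fst q)"
      using pq unfolding pqe P_def by auto
    have hp: "p \<in> S" "q \<in> S" using h XS by auto
    have np: "real_of_int (fst p) \<noteq> l" "real_of_int (fst q) \<noteq> l" using nol h by auto
    have "\<exists>a\<in>S. \<exists>b\<in>S. real_of_int (fst a) \<le> l \<and> l < real_of_int (fst b) \<and> snd a = snd b \<and>
       min (snd p) (snd q) \<le> snd a \<and> snd a \<le> max (snd p) (snd q)"
    proof (cases "real_of_int (fst p) < l")
      case True
      then show ?thesis using cross_v[OF sat hp(1) hp(2), of l] h(4) by auto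
    next
      case False
      hence "l < real_of_int (fst p)" "real_of_int (fst q) \<le> l" using np h(4) by auto
      then show ?thesis using cross_v[OF sat hp(2) hp(1), of l] by (auto simp: min.commute max.commute)
    qed
    then obtain a b where ab: "a\<in>S" "b\<in>S" "real_of_int (fst a) \<le> l" "l < real_of_int (fst b)" "snd a = snd b"
       "min (snd p) (snd q) \<le> snd a" "snd a \<le> max (snd p) (snd q)" by blast
    have "snd a \<in> C" unfolding C_def using ab by (metis (mono_tags, lifting) IntI image_eqI mem_Collect_eq)
    moreover have "pq \<in> F (snd a)" unfolding F_def pqe using pq pqe ab h(3) by auto
    ultimately show "pq \<in> (\<Union>y\<in>C. F y)" by blast
  qed
  have "card P \<le> card (\<Union>y\<in>C. F y)"
    using cover finC finP by (intro card_mono) (auto simp: F_def)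
  also have "\<dots> \<le> (\<Sum>y\<in>C. card (F y))" by (rule card_UN_le[OF finC])
  also have "\<dots> \<le> (\<Sum>y\<in>C. 2)"
  proof (rule sum_mono)
    fix y assume "y \<in> C"
    show "card (F y) \<le> 2" unfolding F_def
      by (rule card_fiber2[OF finP, where A = XW]) (use inj in \<open>auto simp: P_def\<close>)
  qed
  finally show ?thesis using vc unfolding C_def by simp
qed

lemma hcost_le:
  assumes finS: "finite S" and sat: "satisfied S" and XS: "XW \<subseteq> S"
    and inj: "\<forall>p\<in>XW. \<forall>q\<in>XW. fst p = fst q \<longrightarrow> p = q"
    and nol: "\<forall>p\<in>XW. real_of_int (snd p) \<noteq> l"
  shows "hcost XW l \<le> 2 * card (fst ` {p\<in>S. real_of_int (snd p) \<le> l} \<inter> fst ` {p\<in>S. l < real_of_int (snd p)})"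
proof -
  define P where "P = {(p,q). p \<in> XW \<and> q \<in> XW \<and> fst p < fst q \<and>
       \<not> (\<exists>r\<in>XW. fst p < fst r \<and> fst r < fst q) \<and>
       (real_of_int (snd p) < l \<longleftrightarrow> l < real_of_int (snd q))}"
  define C where "C = fst ` {p\<in>S. real_of_int (snd p) \<le> l} \<inter> fst ` {p\<in>S. l < real_of_int (snd p)}"
  define F where "F y = {pq\<in>P. fst (fst pq) \<le> y \<and> y \<le> fst (snd pq)}" for y
  have vc: "hcost XW l = card P" by (simp add: hcost_def P_def)
  have finX: "finite XW" using finS XS finite_subset by blast
  have finP: "finite P" by (rule finite_subset[of _ "XW \<times> XW"]) (use finX in \<open>auto simp: P_def\<close>)
  have finC: "finite C" unfolding C_def using finS by auto
  have cover: "P \<subseteq> (\<Union>y\<in>C. F y)"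
  proof
    fix pq assume pq: "pq \<in> P"
    obtain p q where pqe: "pq = (p,q)" by (metis surj_pair)
    have h: "p \<in> XW" "q \<in> XW" "fst p < fst q" "real_of_int (snd p) < l \<longleftrightarrow> l < real_of_int (snd q)"
      using pq unfolding pqe P_def by auto
    have hp: "p \<in> S" "q \<in> S" using h XS by auto
    have np: "real_of_int (snd p) \<noteq> l" "real_of_int (snd q) \<noteq> l" using nol h by auto
    have "\<exists>a\<in>S. \<exists>b\<in>S. real_of_int (snd a) \<le> l \<and> l < real_of_int (snd b) \<and> fst a = fst b \<and>
       min (fst p) (fst q) \<le> fst a \<and> fst a \<le> max (fst p) (fst q)"
    proof (cases "real_of_int (snd p) < l")
      case True
      then show ?thesis using cross_h[OF sat hp(1) hp(2), of l] h(4) by auto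
    next
      case False
      hence "l < real_of_int (snd p)" "real_of_int (snd q) \<le> l" using np h(4) by auto
      then show ?thesis using cross_h[OF sat hp(2) hp(1), of l] by (auto simp: min.commute max.commute)
    qed
    then obtain a b where ab: "a\<in>S" "b\<in>S" "real_of_int (snd a) \<le> l" "l < real_of_int (snd b)" "fst a = fst b"
       "min (fst p) (fst q) \<le> fst a" "fst a \<le> max (fst p) (fst q)" by blast
    have "fst a \<in> C" unfolding C_def using ab by (metis (mono_tags, lifting) IntI image_eqI mem_Collect_eq)
    moreover have "pq \<in> F (fst a)" unfolding F_def pqe using pq pqe ab h(3) by auto
    ultimately show "pq \<in> (\<Union>y\<in>C. F y)" by blast
  qed
  have "card P \<le> card (\<Union>y\<in>C. F y)"
    using cover finC finP by (intro card_mono) (auto simp: F_def)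
  also have "\<dots> \<le> (\<Sum>y\<in>C. card (F y))" by (rule card_UN_le[OF finC])
  also have "\<dots> \<le> (\<Sum>y\<in>C. 2)"
  proof (rule sum_mono)
    fix y assume "y \<in> C"
    show "card (F y) \<le> 2" unfolding F_def
      by (rule card_fiber2[OF finP, where A = XW]) (use inj in \<open>auto simp: P_def\<close>)
  qed
  finally show ?thesis using vc unfolding C_def by simp
qed



lemma inR_sub: "inR X R \<subseteq> X"
  by (cases R) (auto simp: inR_def)

lemma perm_snd: "is_permutation X \<Longrightarrow> A \<subseteq> X \<Longrightarrow> \<forall>p\<in>A. \<forall>q\<in>A. snd p = snd q \<longrightarrow> p = q"
  unfolding is_permutation_def by blast
lemma perm_fst: "is_permutation X \<Longrightarrow> A \<subseteq> X \<Longrightarrow> \<forall>p\<in>A. \<forall>q\<in>A. fst p = fst q \<longrightarrow> p = q"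
  unfolding is_permutation_def by blast

lemma main_inv:
  assumes Zfin: "finite Z" and Zsat: "satisfied Z" and XZ: "X \<subseteq> Z" and perm: "is_permutation X"
  shows "valid_gtree X R T \<Longrightarrow> box_closed W \<Longrightarrow> X \<inter> W = inR X R \<Longrightarrow> inR X R \<noteq> {} \<Longrightarrow>
    gb_tree X R T + 2 * card (fst ` (Z\<inter>W)) + 2 * card (snd ` (Z\<inter>W)) \<le> 2 * card (Z\<inter>W) + 2 * card (X\<inter>W)"
proof (induction T arbitrary: R W)
  case Leaf
  have finX: "finite (X \<inter> W)" using Zfin XZ finite_subset by blast
  have "card (X \<inter> W) \<le> 1" using Leaf.prems(1,3) by simp
  moreover have "X \<inter> W \<noteq> {}" using Leaf.prems(3,4) by simp
  ultimately have c1: "card (X \<inter> W) = 1" using finX by (metis One_nat_def card_0_eq le_SucE le_zero_eq)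
  have "card (fst ` (Z\<inter>W)) + card (snd ` (Z\<inter>W)) \<le> card (Z\<inter>W) + 1"
    using rows_cols[of "Z \<inter> W"] Zfin sat_Int[OF Zsat Leaf.prems(2)] \<open>X \<inter> W \<noteq> {}\<close> XZ by blast
  then show ?case using c1 by simp
next
  case (VCut l T1 T2)
  obtain a b c d where R: "R = (a,b,c,d)" by (metis prod_cases4)
  from VCut.prems(1) have v: "a < l" "l < b" "\<forall>p\<in>inR X (a,b,c,d). real_of_int (fst p) \<noteq> l"
    "inR X (a,l,c,d) \<noteq> {}" "inR X (l,b,c,d) \<noteq> {}" "valid_gtree X (a,l,c,d) T1" "valid_gtree X (l,b,c,d) T2"
    unfolding R by auto
  define W1 where "W1 = W \<inter> {p. real_of_int (fst p) \<le> l}"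
  define W2 where "W2 = W \<inter> {p. l < real_of_int (fst p)}"
  have bc: "box_closed W1" "box_closed W2"
    using VCut.prems(2) bc_fle bc_fgt bc_Int unfolding W1_def W2_def by auto
  have XW: "X \<inter> W = inR X (a,b,c,d)" using VCut.prems(3) R by simp
  have "X \<inter> W1 = (X \<inter> W) \<inter> {p. real_of_int (fst p) \<le> l}" unfolding W1_def by auto
  also have "\<dots> = inR X (a,b,c,d) \<inter> {p. real_of_int (fst p) \<le> l}" using XW by simp
  also have "\<dots> = inR X (a,l,c,d)" using v(2) by (auto simp: inR_def)
  finally have X1: "X \<inter> W1 = inR X (a,l,c,d)" .
  have "X \<inter> W2 = (X \<inter> W) \<inter> {p. l < real_of_int (fst p)}" unfolding W2_def by auto
  also have "\<dots> = inR X (a,b,c,d) \<inter> {p. l < real_of_int (fst p)}" using XW by simp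
  also have "\<dots> = inR X (l,b,c,d)"
  proof (rule set_eqI, rule iffI)
    fix p assume "p \<in> inR X (a,b,c,d) \<inter> {p. l < real_of_int (fst p)}"
    then show "p \<in> inR X (l,b,c,d)" by (auto simp: inR_def)
  next
    fix p assume p: "p \<in> inR X (l,b,c,d)"
    hence "p \<in> inR X (a,b,c,d)" using v(1) by (auto simp: inR_def)
    moreover have "real_of_int (fst p) \<noteq> l" using v(3) calculation by blast
    ultimately show "p \<in> inR X (a,b,c,d) \<inter> {p. l < real_of_int (fst p)}" using p by (auto simp: inR_def)
  qed
  finally have X2: "X \<inter> W2 = inR X (l,b,c,d)" .
  have IH1: "gb_tree X (a,l,c,d) T1 + 2 * card (fst ` (Z\<inter>W1)) + 2 * card (snd ` (Z\<inter>W1))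
      \<le> 2 * card (Z\<inter>W1) + 2 * card (X\<inter>W1)"
    using VCut.IH(1)[OF v(6) bc(1) X1 v(4)] .
  have IH2: "gb_tree X (l,b,c,d) T2 + 2 * card (fst ` (Z\<inter>W2)) + 2 * card (snd ` (Z\<inter>W2))
      \<le> 2 * card (Z\<inter>W2) + 2 * card (X\<inter>W2)"
    using VCut.IH(2)[OF v(7) bc(2) X2 v(5)] .
  have S1e: "Z \<inter> W1 = {p \<in> Z\<inter>W. real_of_int (fst p) \<le> l}" unfolding W1_def by auto
  have S2e: "Z \<inter> W2 = {p \<in> Z\<inter>W. l < real_of_int (fst p)}" unfolding W2_def by auto
  have fin: "finite (Z\<inter>W1)" "finite (Z\<inter>W2)" "finite (X\<inter>W1)" "finite (X\<inter>W2)" "finite (Z \<inter> W)"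
    using Zfin XZ finite_subset by auto
  have un: "Z \<inter> W = (Z \<inter> W1) \<union> (Z \<inter> W2)" "(Z \<inter> W1) \<inter> (Z \<inter> W2) = {}"
    unfolding W1_def W2_def by auto
  have unX: "X \<inter> W = (X \<inter> W1) \<union> (X \<inter> W2)" "(X \<inter> W1) \<inter> (X \<inter> W2) = {}"
    unfolding W1_def W2_def by auto
  have cS: "card (Z\<inter>W) = card (Z\<inter>W1) + card (Z\<inter>W2)"
    using un fin by (metis card_Un_disjoint)
  have cX: "card (X\<inter>W) = card (X\<inter>W1) + card (X\<inter>W2)"
    using unX fin by (metis card_Un_disjoint)
  have fimg: "fst ` (Z\<inter>W) = fst ` (Z\<inter>W1) \<union> fst ` (Z\<inter>W2)" using un(1) by (metis image_Un)
  have fdis: "fst ` (Z\<inter>W1) \<inter> fst ` (Z\<inter>W2) = {}" unfolding W1_def W2_def by force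
  have cF: "card (fst ` (Z\<inter>W)) = card (fst ` (Z\<inter>W1)) + card (fst ` (Z\<inter>W2))"
    using fimg fdis fin by (metis card_Un_disjoint finite_imageI)
  have simg: "snd ` (Z\<inter>W) = snd ` (Z\<inter>W1) \<union> snd ` (Z\<inter>W2)" using un(1) by (metis image_Un)
  have "card (snd ` (Z\<inter>W1)) + card (snd ` (Z\<inter>W2)) =
      card (snd ` (Z\<inter>W1) \<union> snd ` (Z\<inter>W2)) + card (snd ` (Z\<inter>W1) \<inter> snd ` (Z\<inter>W2))"
    using fin by (intro card_Un_Int) auto
  hence cR: "card (snd ` (Z\<inter>W1)) + card (snd ` (Z\<inter>W2)) =
      card (snd ` (Z\<inter>W)) + card (snd ` (Z\<inter>W1) \<inter> snd ` (Z\<inter>W2))" using simg by metis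
  have sub: "inR X (a,b,c,d) \<subseteq> Z \<inter> W" using XW XZ by blast
  have cost: "vcost (inR X (a,b,c,d)) l \<le> 2 * card (snd ` (Z\<inter>W1) \<inter> snd ` (Z\<inter>W2))"
    unfolding S1e S2e
    by (rule vcost_le[OF fin(5) sat_Int[OF Zsat VCut.prems(2)] sub perm_snd[OF perm inR_sub] v(3)])
  have gb: "gb_tree X R (VCut l T1 T2) = vcost (inR X (a,b,c,d)) l + gb_tree X (a,l,c,d) T1 + gb_tree X (l,b,c,d) T2"
    by (simp add: R)
  show ?case using IH1 IH2 cS cX cF cR cost gb by linarith
next
  case (HCut l T1 T2)
  obtain a b c d where R: "R = (a,b,c,d)" by (metis prod_cases4)
  from HCut.prems(1) have v: "c < l" "l < d" "\<forall>p\<in>inR X (a,b,c,d). real_of_int (snd p) \<noteq> l"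
    "inR X (a,b,c,l) \<noteq> {}" "inR X (a,b,l,d) \<noteq> {}" "valid_gtree X (a,b,c,l) T1" "valid_gtree X (a,b,l,d) T2"
    unfolding R by auto
  define W1 where "W1 = W \<inter> {p. real_of_int (snd p) \<le> l}"
  define W2 where "W2 = W \<inter> {p. l < real_of_int (snd p)}"
  have bc: "box_closed W1" "box_closed W2"
    using HCut.prems(2) bc_sle bc_sgt bc_Int unfolding W1_def W2_def by auto
  have XW: "X \<inter> W = inR X (a,b,c,d)" using HCut.prems(3) R by simp
  have "X \<inter> W1 = (X \<inter> W) \<inter> {p. real_of_int (snd p) \<le> l}" unfolding W1_def by auto
  also have "\<dots> = inR X (a,b,c,d) \<inter> {p. real_of_int (snd p) \<le> l}" using XW by simp
  also have "\<dots> = inR X (a,b,c,l)" using v(2) by (auto simp: inR_def)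
  finally have X1: "X \<inter> W1 = inR X (a,b,c,l)" .
  have "X \<inter> W2 = (X \<inter> W) \<inter> {p. l < real_of_int (snd p)}" unfolding W2_def by auto
  also have "\<dots> = inR X (a,b,c,d) \<inter> {p. l < real_of_int (snd p)}" using XW by simp
  also have "\<dots> = inR X (a,b,l,d)"
  proof (rule set_eqI, rule iffI)
    fix p assume "p \<in> inR X (a,b,c,d) \<inter> {p. l < real_of_int (snd p)}"
    then show "p \<in> inR X (a,b,l,d)" by (auto simp: inR_def)
  next
    fix p assume p: "p \<in> inR X (a,b,l,d)"
    hence "p \<in> inR X (a,b,c,d)" using v(1) by (auto simp: inR_def)
    moreover have "real_of_int (snd p) \<noteq> l" using v(3) calculation by blast
    ultimately show "p \<in> inR X (a,b,c,d) \<inter> {p. l < real_of_int (snd p)}" using p by (auto simp: inR_def)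
  qed
  finally have X2: "X \<inter> W2 = inR X (a,b,l,d)" .
  have IH1: "gb_tree X (a,b,c,l) T1 + 2 * card (fst ` (Z\<inter>W1)) + 2 * card (snd ` (Z\<inter>W1))
      \<le> 2 * card (Z\<inter>W1) + 2 * card (X\<inter>W1)"
    using HCut.IH(1)[OF v(6) bc(1) X1 v(4)] .
  have IH2: "gb_tree X (a,b,l,d) T2 + 2 * card (fst ` (Z\<inter>W2)) + 2 * card (snd ` (Z\<inter>W2))
      \<le> 2 * card (Z\<inter>W2) + 2 * card (X\<inter>W2)"
    using HCut.IH(2)[OF v(7) bc(2) X2 v(5)] .
  have S1e: "Z \<inter> W1 = {p \<in> Z\<inter>W. real_of_int (snd p) \<le> l}" unfolding W1_def by auto
  have S2e: "Z \<inter> W2 = {p \<in> Z\<inter>W. l < real_of_int (snd p)}" unfolding W2_def by auto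
  have fin: "finite (Z\<inter>W1)" "finite (Z\<inter>W2)" "finite (X\<inter>W1)" "finite (X\<inter>W2)" "finite (Z \<inter> W)"
    using Zfin XZ finite_subset by auto
  have un: "Z \<inter> W = (Z \<inter> W1) \<union> (Z \<inter> W2)" "(Z \<inter> W1) \<inter> (Z \<inter> W2) = {}"
    unfolding W1_def W2_def by auto
  have unX: "X \<inter> W = (X \<inter> W1) \<union> (X \<inter> W2)" "(X \<inter> W1) \<inter> (X \<inter> W2) = {}"
    unfolding W1_def W2_def by auto
  have cS: "card (Z\<inter>W) = card (Z\<inter>W1) + card (Z\<inter>W2)"
    using un fin by (metis card_Un_disjoint)
  have cX: "card (X\<inter>W) = card (X\<inter>W1) + card (X\<inter>W2)"
    using unX fin by (metis card_Un_disjoint)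
  have fimg: "snd ` (Z\<inter>W) = snd ` (Z\<inter>W1) \<union> snd ` (Z\<inter>W2)" using un(1) by (metis image_Un)
  have fdis: "snd ` (Z\<inter>W1) \<inter> snd ` (Z\<inter>W2) = {}" unfolding W1_def W2_def by force
  have cF: "card (snd ` (Z\<inter>W)) = card (snd ` (Z\<inter>W1)) + card (snd ` (Z\<inter>W2))"
    using fimg fdis fin by (metis card_Un_disjoint finite_imageI)
  have simg: "fst ` (Z\<inter>W) = fst ` (Z\<inter>W1) \<union> fst ` (Z\<inter>W2)" using un(1) by (metis image_Un)
  have "card (fst ` (Z\<inter>W1)) + card (fst ` (Z\<inter>W2)) =
      card (fst ` (Z\<inter>W1) \<union> fst ` (Z\<inter>W2)) + card (fst ` (Z\<inter>W1) \<inter> fst ` (Z\<inter>W2))"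
    using fin by (intro card_Un_Int) auto
  hence cR: "card (fst ` (Z\<inter>W1)) + card (fst ` (Z\<inter>W2)) =
      card (fst ` (Z\<inter>W)) + card (fst ` (Z\<inter>W1) \<inter> fst ` (Z\<inter>W2))" using simg by metis
  have sub: "inR X (a,b,c,d) \<subseteq> Z \<inter> W" using XW XZ by blast
  have cost: "hcost (inR X (a,b,c,d)) l \<le> 2 * card (fst ` (Z\<inter>W1) \<inter> fst ` (Z\<inter>W2))"
    unfolding S1e S2e
    by (rule hcost_le[OF fin(5) sat_Int[OF Zsat HCut.prems(2)] sub perm_fst[OF perm inR_sub] v(3)])
  have gb: "gb_tree X R (HCut l T1 T2) = hcost (inR X (a,b,c,d)) l + gb_tree X (a,b,c,l) T1 + gb_tree X (a,b,l,d) T2"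
    by (simp add: R)
  show ?case using IH1 IH2 cS cX cF cR cost gb by linarith
qed



lemma exists_tree: "finite X \<Longrightarrow> is_permutation X \<Longrightarrow> \<exists>T. valid_gtree X R T"
proof (induction "card (inR X R)" arbitrary: R rule: less_induct)
  case less
  obtain a b c d where R: "R = (a,b,c,d)" by (metis prod_cases4)
  define I where "I = inR X (a,b,c,d)"
  have finI: "finite I" using less.prems(1) inR_sub finite_subset unfolding I_def by blast
  show ?case
  proof (cases "card I \<le> 1")
    case True then show ?thesis by (intro exI[of _ Leaf]) (simp add: R I_def)
  next
    case False
    hence Ine: "I \<noteq> {}" by auto
    define m where "m = Min (fst ` I)"
    have "m \<in> fst ` I" unfolding m_def using finI Ine by (intro Min_in) auto
    then obtain p0 where p0: "p0 \<in> I" "fst p0 = m" by auto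
    have mle: "\<forall>p\<in>I. m \<le> fst p" using finI by (simp add: m_def)
    have "\<not> I \<subseteq> {p0}"
    proof
      assume "I \<subseteq> {p0}"
      hence "card I \<le> card {p0}" by (intro card_mono) auto
      thus False using False by simp
    qed
    then obtain p1 where p1: "p1 \<in> I" "p1 \<noteq> p0" by blast
    have "fst p1 \<noteq> fst p0" using less.prems(2) p0 p1 inR_sub unfolding is_permutation_def I_def by blast
    hence m1: "m + 1 \<le> fst p1" using mle p1 p0 by force
    define l where "l = real_of_int m + 1/2"
    have am: "a \<le> real_of_int m" using p0 unfolding I_def inR_def by auto
    have bm: "real_of_int (fst p1) \<le> b" using p1 unfolding I_def inR_def by auto
    have "real_of_int m + 1 \<le> real_of_int (fst p1)" using m1 by linarith
    hence al: "a < l" "l < b" using am bm unfolding l_def by auto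
    have nol: "\<forall>p\<in>I. real_of_int (fst p) \<noteq> l"
    proof
      fix p assume "p \<in> I"
      hence "m \<le> fst p" using mle by auto
      hence "fst p = m \<or> m + 1 \<le> fst p" by linarith
      thus "real_of_int (fst p) \<noteq> l"
      proof
        assume "fst p = m" thus ?thesis unfolding l_def by simp
      next
        assume "m + 1 \<le> fst p"
        hence "real_of_int m + 1 \<le> real_of_int (fst p)" by linarith
        thus ?thesis unfolding l_def by linarith
      qed
    qed
    have L0: "p0 \<in> inR X (a,l,c,d)" using p0 unfolding I_def inR_def l_def by auto
    have R1: "p1 \<in> inR X (l,b,c,d)" using p1 al \<open>real_of_int m + 1 \<le> real_of_int (fst p1)\<close> unfolding I_def inR_def l_def by auto
    have Lsub: "inR X (a,l,c,d) \<subseteq> I" using al unfolding I_def inR_def by auto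
    have Rsub: "inR X (l,b,c,d) \<subseteq> I" using al unfolding I_def inR_def by auto
    have "p1 \<notin> inR X (a,l,c,d)"
      using \<open>real_of_int m + 1 \<le> real_of_int (fst p1)\<close> unfolding inR_def l_def by auto
    hence cL: "card (inR X (a,l,c,d)) < card (inR X R)"
      using Lsub p1 finI unfolding R I_def by (intro psubset_card_mono) auto
    have "p0 \<notin> inR X (l,b,c,d)"
      using p0 unfolding inR_def l_def by auto
    hence cR: "card (inR X (l,b,c,d)) < card (inR X R)"
      using Rsub p0 finI unfolding R I_def by (intro psubset_card_mono) auto
    obtain T1 where T1: "valid_gtree X (a,l,c,d) T1" using less.hyps[OF cL less.prems] by blast
    obtain T2 where T2: "valid_gtree X (l,b,c,d) T2" using less.hyps[OF cR less.prems] by blast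
    have "valid_gtree X R (VCut l T1 T2)"
      using al nol L0 R1 T1 T2 unfolding R I_def by auto
    thus ?thesis by blast
  qed
qed

lemma exists_bbox: "finite X \<Longrightarrow> \<exists>B. is_bbox X B"
proof -
  assume fin: "finite X"
  define M where "M = (\<Sum>p\<in>X. \<bar>fst p\<bar> + \<bar>snd p\<bar>)"
  have le: "\<bar>fst p\<bar> + \<bar>snd p\<bar> \<le> M" if "p \<in> X" for p
    unfolding M_def by (rule member_le_sum[OF that _ fin]) auto
  have "inR X (- real_of_int M, real_of_int M, - real_of_int M, real_of_int M) = X"
  proof (rule set_eqI, rule iffI)
    fix p assume "p \<in> inR X (- real_of_int M, real_of_int M, - real_of_int M, real_of_int M)"
    thus "p \<in> X" unfolding inR_def by auto
  next
    fix p assume p: "p \<in> X"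
    have "- M \<le> fst p" "fst p \<le> M" "- M \<le> snd p" "snd p \<le> M" using le[OF p] by auto
    hence "- real_of_int M \<le> real_of_int (fst p)" "real_of_int (fst p) \<le> real_of_int M"
      "- real_of_int M \<le> real_of_int (snd p)" "real_of_int (snd p) \<le> real_of_int M" by linarith+
    thus "p \<in> inR X (- real_of_int M, real_of_int M, - real_of_int M, real_of_int M)"
      using p unfolding inR_def by auto
  qed
  thus ?thesis unfolding is_bbox_def by blast
qed

lemma opt_witness:
  assumes "finite X"
  shows "\<exists>Y. finite Y \<and> card Y = opt X \<and> satisfied (X \<union> Y)"
proof -
  define G where "G = fst ` X \<times> snd ` X"
  have finG: "finite G" unfolding G_def using assms by auto
  have XG: "X \<union> G = G" unfolding G_def by force
  have satG: "satisfied G"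
    unfolding satisfied_def
  proof (intro ballI impI)
    fix p q assume pq: "p \<in> G" "q \<in> G" "\<not> collinear_pt p q"
    define r where "r = (fst p, snd q)"
    have "r \<in> G" using pq(1,2) unfolding G_def r_def by (simp add: mem_Times_iff)
    moreover have "r \<noteq> p" "r \<noteq> q" using pq(3) unfolding r_def collinear_pt_def by (auto simp: prod_eq_iff)
    moreover have "in_box p q r" unfolding r_def in_box_def by auto
    ultimately show "pair_satisfied G p q" unfolding pair_satisfied_def by blast
  qed
  have ex: "\<exists>k. \<exists>Y. finite Y \<and> card Y = k \<and> satisfied (X \<union> Y)"
    using finG satG XG by metis
  show ?thesis unfolding opt_def by (rule LeastI_ex[OF ex])
qed

theorem lemma5p3:
  fixes X :: "point set"
  assumes "finite X" and "is_permutation X"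
  shows "GB X \<le> 2 * opt X"
proof -
  obtain Y where Y: "finite Y" "card Y = opt X" "satisfied (X \<union> Y)"
    using opt_witness[OF assms(1)] by blast
  define Z where "Z = X \<union> Y"
  have Zfin: "finite Z" and XZ: "X \<subseteq> Z" using Y assms unfolding Z_def by auto
  have bound: "gb_tree X B T \<le> 2 * card Y" if B: "is_bbox X B" and T: "valid_gtree X B T" for B T
  proof (cases "X = {}")
    case True
    obtain a b c d where Be: "B = (a,b,c,d)" by (metis prod_cases4)
    show ?thesis using T True unfolding Be by (cases T) (auto simp: inR_def)
  next
    case False
    have XB: "X \<inter> UNIV = inR X B" using B unfolding is_bbox_def by simp
    have "inR X B \<noteq> {}" using B False unfolding is_bbox_def by simp
    from main_inv[OF Zfin _ XZ assms(2) T bc_UNIV XB this] Y(3)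
    have M: "gb_tree X B T + 2 * card (fst ` Z) + 2 * card (snd ` Z) \<le> 2 * card Z + 2 * card X"
      unfolding Z_def by simp
    have "inj_on fst X" using assms(2) unfolding is_permutation_def inj_on_def by blast
    hence "card (fst ` X) = card X" by (rule card_image)
    moreover have "card (fst ` X) \<le> card (fst ` Z)" using Zfin XZ by (intro card_mono) auto
    moreover have "inj_on snd X" using assms(2) unfolding is_permutation_def inj_on_def by blast
    hence "card (snd ` X) = card X" by (rule card_image)
    moreover have "card (snd ` X) \<le> card (snd ` Z)" using Zfin XZ by (intro card_mono) auto
    moreover have "card Z \<le> card X + card Y" unfolding Z_def by (rule card_Un_le)
    ultimately show ?thesis using M by linarith
  qed
  define G where "G = {gb_tree X B T | B T. is_bbox X B \<and> valid_gtree X B T}"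
  obtain B where B: "is_bbox X B" using exists_bbox[OF assms(1)] by blast
  obtain T where T: "valid_gtree X B T" using exists_tree[OF assms] by blast
  have Gne: "G \<noteq> {}" unfolding G_def using B T by blast
  have Gsub: "G \<subseteq> {..2 * card Y}" unfolding G_def using bound by auto
  hence Gfin: "finite G" using finite_subset by blast
  have "Max G \<le> 2 * card Y" using Gsub Gfin Gne by (simp add: Max_le_iff subset_eq)
  thus ?thesis unfolding GB_def G_def[symmetric] using Y(2) by simp
qed

end
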